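(* Let $t \geq 1$ and $N \geq 2t+1$ be integers, and let $G$ be a graph with no isolated vertices, $e(G)=N$, $\Delta(G) = N-t > \frac{N}{2}$, and $e(L(G)) = f(N,N-t)$. Then $f(N,N-t) = \binom{N-t}{2} + \binom{t+2}{2} - 1$, and $G$ is one of the following: (1) the graph $Q(N,t)$: $G$ contains two adjacent vertices $u$ and $v$ with $\deg(u) = N-t$ and $\deg(v) = t+1$, such that all $t$ neighbours of $v$ other than $u$ are also neighbours of $u$ (so $G$ consists of the star centred at $u$ with $N-t$ leaves together with $t$ edges joining $v$ to $t$ other leaves of this star); (2) only when $t=3$, the graph $Q^*(N,3)$: the star centred at a vertex $u$ with $N-3$ leaves together with a triangle on three of these leaves.
   Context: All graphs are finite and simple; $L(G)$ is the line graph of $G$; $e(\cdot)$, $\Delta(\cdot)$, $\delta(\cdot)$ denote number of edges, maximum degree and minimum degree. For integers $N \ge \Delta \ge 1$, $f(N,\Delta) = \max\{ e(L(G)) : e(G)=N, \Delta(G)=\Delta, \delta(G)\geq 1\}$, the maximum over all simple graphs $G$. *)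

theory Defs
  imports Complex_Main
begin

definition simple_graph :: "'a set \<Rightarrow> 'a set set \<Rightarrow> bool" where
  "simple_graph V E \<longleftrightarrow> finite V \<and>
     (\<forall>e\<in>E. \<exists>x y. x \<noteq> y \<and> x \<in> V \<and> y \<in> V \<and> e = {x, y})"

definition degree :: "'a set set \<Rightarrow> 'a \<Rightarrow> nat" where
  "degree E v = card {e \<in> E. v \<in> e}"

definition max_degree :: "'a set \<Rightarrow> 'a set set \<Rightarrow> nat" where
  "max_degree V E = Max (degree E ` V)"

definition min_degree :: "'a set \<Rightarrow> 'a set set \<Rightarrow> nat" where
  "min_degree V E = Min (degree E ` V)"

definition line_graph_edges :: "'a set set \<Rightarrow> nat" where
  "line_graph_edges E = card {{e1, e2} | e1 e2. e1 \<in> E \<and> e2 \<in> E \<and> e1 \<noteq> e2 \<and> e1 \<inter> e2 \<noteq> {}}"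

text \<open>f(N,D): maximum of e(L(G)) over simple graphs with N edges, max degree D and min degree \<ge> 1.
  Every finite graph is isomorphic to one on natural-number vertices, so we range over those.\<close>
definition f_max :: "nat \<Rightarrow> nat \<Rightarrow> nat" where
  "f_max N D = Max {line_graph_edges E | (V :: nat set) E.
      simple_graph V E \<and> card E = N \<and> max_degree V E = D \<and> min_degree V E \<ge> 1}"

end

theory Submission
  imports Defs
begin


lemma sg_finite_E: "simple_graph V E \<Longrightarrow> finite E"
proof -
  assume "simple_graph V E"
  then have "E \<subseteq> Pow V" "finite V" unfolding simple_graph_def by auto
  then show ?thesis by (meson finite_Pow_iff finite_subset)
qed

lemma sg_card2: "simple_graph V E \<Longrightarrow> e \<in> E \<Longrightarrow> card e = 2"
  unfolding simple_graph_def by auto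

lemma sg_edge: "simple_graph V E \<Longrightarrow> e \<in> E \<Longrightarrow> \<exists>x y. x \<noteq> y \<and> x \<in> V \<and> y \<in> V \<and> e = {x, y}"
  unfolding simple_graph_def by auto

lemma lge_alt:
  assumes "\<forall>e\<in>E. e \<noteq> {}"
  shows "line_graph_edges E = card {A. A \<subseteq> E \<and> card A = 2 \<and> (\<forall>e1\<in>A. \<forall>e2\<in>A. e1 \<inter> e2 \<noteq> {})}"
proof -
  have "{{e1, e2} | e1 e2. e1 \<in> E \<and> e2 \<in> E \<and> e1 \<noteq> e2 \<and> e1 \<inter> e2 \<noteq> {}}
      = {A. A \<subseteq> E \<and> card A = 2 \<and> (\<forall>e1\<in>A. \<forall>e2\<in>A. e1 \<inter> e2 \<noteq> {})}"
  proof (rule set_eqI, rule iffI)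
    fix A assume "A \<in> {{e1, e2} | e1 e2. e1 \<in> E \<and> e2 \<in> E \<and> e1 \<noteq> e2 \<and> e1 \<inter> e2 \<noteq> {}}"
    then have "\<exists>e1 e2. A = {e1,e2} \<and> e1 \<in> E \<and> e2 \<in> E \<and> e1 \<noteq> e2 \<and> e1 \<inter> e2 \<noteq> {}"
      by (simp only: mem_Collect_eq)
    then obtain e1 e2 where A: "A = {e1,e2}" "e1 \<in> E" "e2 \<in> E" "e1 \<noteq> e2" "e1 \<inter> e2 \<noteq> {}"
      by (elim exE conjE) (intro that)
    have "e1 \<inter> e1 \<noteq> {}" "e2 \<inter> e2 \<noteq> {}" using assms A(2,3) by auto
    moreover have "e2 \<inter> e1 \<noteq> {}" using A(5) by blast
    ultimately show "A \<in> {A. A \<subseteq> E \<and> card A = 2 \<and> (\<forall>e1\<in>A. \<forall>e2\<in>A. e1 \<inter> e2 \<noteq> {})}"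
      using A by simp
  next
    fix A assume "A \<in> {A. A \<subseteq> E \<and> card A = 2 \<and> (\<forall>e1\<in>A. \<forall>e2\<in>A. e1 \<inter> e2 \<noteq> {})}"
    then have h: "card A = 2" "A \<subseteq> E" "\<forall>e1\<in>A. \<forall>e2\<in>A. e1 \<inter> e2 \<noteq> {}" by auto
    then obtain e1 e2 where A: "A = {e1,e2}" "e1 \<noteq> e2" by (meson card_2_iff)
    have "e1 \<in> E" "e2 \<in> E" "e1 \<inter> e2 \<noteq> {}" using h A by auto
    then have "\<exists>a b. A = {a,b} \<and> a \<in> E \<and> b \<in> E \<and> a \<noteq> b \<and> a \<inter> b \<noteq> {}"
      using A by blast
    then show "A \<in> {{e1, e2} | e1 e2. e1 \<in> E \<and> e2 \<in> E \<and> e1 \<noteq> e2 \<and> e1 \<inter> e2 \<noteq> {}}"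
      by (simp only: mem_Collect_eq)
  qed
  then show ?thesis unfolding line_graph_edges_def by simp
qed

lemma edge_with:
  assumes "simple_graph V E" "e \<in> E" "u \<in> e"
  shows "\<exists>x. e = {u,x} \<and> x \<noteq> u"
proof -
  obtain a b where ab: "a \<noteq> b" "e = {a,b}" using sg_edge[OF assms(1,2)] by blast
  then have "u = a \<or> u = b" using assms(3) by blast
  then show ?thesis
  proof
    assume "u = a" then show ?thesis using ab by blast
  next
    assume "u = b" then have "e = {u,a}" using ab by (simp add: insert_commute)
    then show ?thesis using ab \<open>u = b\<close> by blast
  qed
qed

lemma count:
  assumes sg: "simple_graph V E"
  shows "line_graph_edges E = (card {e\<in>E. u\<in>e} choose 2)
     + card {A. A \<subseteq> {e\<in>E. u\<notin>e} \<and> card A = 2 \<and> (\<forall>e1\<in>A. \<forall>e2\<in>A. e1 \<inter> e2 \<noteq> {})}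
     + (\<Sum>f\<in>{e\<in>E. u\<notin>e}. card (f \<inter> {x. {u,x}\<in>E}))"
proof -
  define S where "S = {e\<in>E. u\<in>e}"
  define F where "F = {e\<in>E. u\<notin>e}"
  define Nu where "Nu = {x. {u,x}\<in>E}"
  define Q where "Q = {A. A \<subseteq> E \<and> card A = 2 \<and> (\<forall>e1\<in>A. \<forall>e2\<in>A. e1 \<inter> e2 \<noteq> {})}"
  define Q1 where "Q1 = {A. A \<subseteq> S \<and> card A = 2}"
  define P2 where "P2 = {A. A \<subseteq> F \<and> card A = 2 \<and> (\<forall>e1\<in>A. \<forall>e2\<in>A. e1 \<inter> e2 \<noteq> {})}"
  define g where "g = (\<lambda>(f::'a set, x::'a). {{u,x}, f})"
  define Q3 where "Q3 = g ` (SIGMA f:F. f \<inter> Nu)"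
  have finE: "finite E" using sg sg_finite_E by blast
  have c2: "\<And>e. e \<in> E \<Longrightarrow> card e = 2" using sg sg_card2 by blast
  have ne: "\<forall>e\<in>E. e \<noteq> {}" using c2 by fastforce
  have finF: "finite F" "finite S" using finE unfolding F_def S_def by auto
  have fine: "\<And>e. e \<in> E \<Longrightarrow> finite e" using c2 by (metis card.infinite zero_neq_numeral)
  have L: "line_graph_edges E = card Q" using lge_alt[OF ne] Q_def by simp
  have Sform: "\<And>e. e \<in> S \<Longrightarrow> \<exists>x. e = {u,x} \<and> x \<in> Nu"
  proof -
    fix e assume "e \<in> S"
    then have "e \<in> E" "u \<in> e" unfolding S_def by auto
    then obtain x where "e = {u,x}" using edge_with[OF sg] by blast
    then show "\<exists>x. e = {u,x} \<and> x \<in> Nu" using \<open>e\<in>E\<close> unfolding Nu_def by blast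
  qed
  have QU: "Q = Q1 \<union> P2 \<union> Q3"
  proof (rule set_eqI, rule iffI)
    fix A assume "A \<in> Q"
    then have h: "card A = 2" "A \<subseteq> E" "\<forall>e1\<in>A. \<forall>e2\<in>A. e1 \<inter> e2 \<noteq> {}" unfolding Q_def by auto
    then obtain e1 e2 where A0: "A = {e1,e2}" "e1 \<noteq> e2" by (meson card_2_iff)
    have A: "A = {e1,e2}" "e1 \<noteq> e2" "e1 \<in> E" "e2 \<in> E" "e1 \<inter> e2 \<noteq> {}"
      "\<forall>e1\<in>A. \<forall>e2\<in>A. e1 \<inter> e2 \<noteq> {}" using h A0 by auto
    show "A \<in> Q1 \<union> P2 \<union> Q3"
    proof (cases "u \<in> e1")
      case True
      show ?thesis
      proof (cases "u \<in> e2")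
        case True
        then have "A \<in> Q1" using \<open>u\<in>e1\<close> A unfolding Q1_def S_def by auto
        then show ?thesis by blast
      next
        case False
        obtain x where x: "e1 = {u,x}" "x \<in> Nu" using Sform[of e1] A True S_def by blast
        have "x \<in> e2" using A False x by auto
        then have "(e2, x) \<in> (SIGMA f:F. f \<inter> Nu)" using x A False F_def by auto
        moreover have "A = g (e2, x)" using A x g_def by auto
        ultimately show ?thesis unfolding Q3_def by blast
      qed
    next
      case False
      show ?thesis
      proof (cases "u \<in> e2")
        case True
        obtain x where x: "e2 = {u,x}" "x \<in> Nu" using Sform[of e2] A True S_def by blast
        have "x \<in> e1" using A False x by auto
        then have "(e1, x) \<in> (SIGMA f:F. f \<inter> Nu)" using x A False F_def by auto
        moreover have "A = g (e1, x)" using A x g_def by auto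
        ultimately show ?thesis unfolding Q3_def by blast
      next
        case False
        then have "A \<in> P2" using \<open>u\<notin>e1\<close> A unfolding P2_def F_def by auto
        then show ?thesis by blast
      qed
    qed
  next
    fix A assume "A \<in> Q1 \<union> P2 \<union> Q3"
    then consider "A \<in> Q1" | "A \<in> P2" | "A \<in> Q3" by blast
    then show "A \<in> Q"
    proof cases
      case 1 then show ?thesis unfolding Q1_def Q_def S_def by auto
    next
      case 2 then show ?thesis unfolding P2_def Q_def F_def by auto
    next
      case 3
      then obtain f x where fx: "f \<in> F" "x \<in> f" "x \<in> Nu" "A = {{u,x}, f}" unfolding Q3_def g_def by auto
      have "{u,x} \<noteq> f" using fx F_def by auto
      have "{u,x} \<in> E" "f \<in> E" using fx unfolding Nu_def F_def by auto
      moreover have "card A = 2" using fx \<open>{u,x} \<noteq> f\<close> by simp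
      moreover have "\<forall>e1\<in>A. \<forall>e2\<in>A. x \<in> e1 \<inter> e2" using fx by blast
      ultimately show ?thesis unfolding Q_def using fx(4) by blast
    qed
  qed
  have "Q \<subseteq> Pow E" unfolding Q_def by blast
  then have finQ: "finite Q" using finE by (meson finite_Pow_iff finite_subset)
  have SF: "S \<inter> F = {}" unfolding S_def F_def by blast
  have d1: "Q1 \<inter> P2 = {}"
  proof -
    { fix A assume "A \<in> Q1" "A \<in> P2"
      then have "A \<subseteq> S \<inter> F" "card A = 2" unfolding Q1_def P2_def by auto
      then have False using SF by simp }
    then show ?thesis by blast
  qed
  have d2: "(Q1 \<union> P2) \<inter> Q3 = {}"
  proof -
    { fix A assume "A \<in> Q3"
      then obtain f x where fx: "f \<in> F" "x \<in> f" "x \<in> Nu" "A = {{u,x}, f}" unfolding Q3_def g_def by auto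
      have "{u,x} \<in> S" using fx unfolding S_def Nu_def by simp
      then have "{u,x} \<notin> F" using SF by blast
      moreover have "f \<notin> S" using fx SF by blast
      ultimately have "\<not> A \<subseteq> S \<and> \<not> A \<subseteq> F" using fx by blast }
    then show ?thesis unfolding Q1_def P2_def by blast
  qed
  have inj: "inj_on g (SIGMA f:F. f \<inter> Nu)"
  proof (rule inj_onI)
    fix p q assume p: "p \<in> (SIGMA f:F. f \<inter> Nu)" and q: "q \<in> (SIGMA f:F. f \<inter> Nu)" and gq: "g p = g q"
    obtain f x where pp: "p = (f,x)" by fastforce
    obtain f' x' where qq: "q = (f',x')" by fastforce
    have h: "u \<notin> f" "u \<notin> f'" "x \<in> f" "x' \<in> f'" using p q pp qq F_def by auto
    have "{{u,x}, f} = {{u,x'}, f'}" using gq pp qq g_def by simp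
    moreover have "{u,x} \<noteq> f'" using h by blast
    ultimately have e: "{u,x} = {u,x'} \<and> f = f'" by (simp add: doubleton_eq_iff)
    have "x \<noteq> u" using h by blast
    moreover have "x \<in> {u,x'}" using e by blast
    ultimately have "x = x'" by blast
    then show "p = q" using e pp qq by simp
  qed
  have cQ3: "card Q3 = (\<Sum>f\<in>F. card (f \<inter> Nu))"
    unfolding Q3_def using card_image[OF inj] finF fine F_def by simp
  have cQ1: "card Q1 = card S choose 2" unfolding Q1_def using n_subsets[OF finF(2)] by simp
  have "Q1 \<subseteq> Q" "P2 \<subseteq> Q" "Q3 \<subseteq> Q" using QU by blast+
  then have fin1: "finite Q1" "finite P2" "finite Q3" using finQ finite_subset by blast+
  have "card (Q1 \<union> P2 \<union> Q3) = card (Q1 \<union> P2) + card Q3"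
    using fin1 d2 by (intro card_Un_disjoint) auto
  also have "card (Q1 \<union> P2) = card Q1 + card P2"
    using fin1 d1 by (intro card_Un_disjoint) auto
  finally have "card Q = card Q1 + card P2 + card Q3" using QU by simp
  then have "line_graph_edges E = (card S choose 2) + card P2 + (\<Sum>f\<in>F. card (f \<inter> Nu))"
    using L cQ1 cQ3 by simp
  then show ?thesis by (simp only: S_def F_def P2_def Nu_def)
qed



lemma two_elem:
  assumes "card k = 2" "x \<in> k" "y \<in> k" "x \<noteq> y"
  shows "k = {x,y}"
proof -
  have "finite k" using assms(1) by (metis card.infinite zero_neq_numeral)
  moreover have "{x,y} \<subseteq> k" using assms by blast
  moreover have "card {x,y} = card k" using assms by simp
  ultimately show ?thesis by (metis card_subset_eq)
qed

lemma intersecting: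
  assumes c: "\<forall>f\<in>F. card f = 2" and i: "\<forall>f\<in>F. \<forall>g\<in>F. f \<inter> g \<noteq> {}" and ne: "F \<noteq> {}"
  shows "(\<exists>v. \<forall>f\<in>F. v \<in> f) \<or> (\<exists>a b c. a \<noteq> b \<and> b \<noteq> c \<and> a \<noteq> c \<and> F = {{a,b},{b,c},{a,c}})"
proof (cases "\<exists>v. \<forall>f\<in>F. v \<in> f")
  case True then show ?thesis by blast
next
  case False
  obtain f where f: "f \<in> F" using ne by blast
  obtain a b where ab: "f = {a,b}" "a \<noteq> b" using c f card_2_iff by metis
  obtain g where g: "g \<in> F" "a \<notin> g" using False by blast
  have "f \<inter> g \<noteq> {}" using i f g by blast
  then have bg: "b \<in> g" using ab g by blast
  obtain x y where xy: "g = {x,y}" "x \<noteq> y" using c g card_2_iff by metis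
  obtain cc where gc: "g = {b,cc}" "cc \<noteq> b"
  proof (cases "x = b")
    case True then show ?thesis using that xy by blast
  next
    case False then have "y = b" using bg xy by blast
    then show ?thesis using that xy by (metis insert_commute)
  qed
  have ca: "cc \<noteq> a" using g gc by blast
  obtain h where h: "h \<in> F" "b \<notin> h" using False by blast
  have "f \<inter> h \<noteq> {}" using i f h by blast
  then have ah: "a \<in> h" using ab h by blast
  have "g \<inter> h \<noteq> {}" using i g h by blast
  then have ch: "cc \<in> h" using gc h by blast
  have hac: "h = {a,cc}" using two_elem[of h a cc] c h ah ch ca by auto
  have "F = {f,g,h}"
  proof
    show "{f,g,h} \<subseteq> F" using f g h by blast
  next
    show "F \<subseteq> {f,g,h}"
    proof
      fix k assume k: "k \<in> F"
      have k2: "card k = 2" using c k by blast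
      have kf: "k \<inter> f \<noteq> {}" and kg: "k \<inter> g \<noteq> {}" and kh: "k \<inter> h \<noteq> {}" using i k f g h by blast+
      show "k \<in> {f,g,h}"
      proof (cases "a \<in> k")
        case True
        have "b \<in> k \<or> cc \<in> k" using kg gc by blast
        then show ?thesis
        proof
          assume "b \<in> k" then have "k = f" using two_elem[OF k2 True] ab by simp
          then show ?thesis by blast
        next
          assume "cc \<in> k" then have "k = h" using two_elem[OF k2 True] ca hac by auto
          then show ?thesis by blast
        qed
      next
        case False
        then have bk: "b \<in> k" using kf ab by blast
        have "cc \<in> k" using kh hac False by blast
        then have "k = g" using two_elem[OF k2 bk] gc by auto
        then show ?thesis by blast
      qed
    qed
  qed
  then have "F = {{a,b},{b,cc},{a,cc}}" using ab gc hac by simp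
  then show ?thesis using ab ca gc by blast
qed

lemma bound_eq:
  fixes V :: "'a set" and E :: "'a set set" and u :: 'a
  assumes sg: "simple_graph V E"
  defines "S \<equiv> {e\<in>E. u\<in>e}" and "F \<equiv> {e\<in>E. u\<notin>e}" and "Nu \<equiv> {x. {u,x}\<in>E}"
  shows "line_graph_edges E \<le> (card S choose 2) + (card F choose 2) + 2 * card F"
    and "line_graph_edges E = (card S choose 2) + (card F choose 2) + 2 * card F \<longleftrightarrow>
         ((\<forall>f\<in>F. \<forall>g\<in>F. f \<inter> g \<noteq> {}) \<and> (\<forall>f\<in>F. f \<subseteq> Nu))"
proof -
  define P2 where "P2 = {A. A \<subseteq> F \<and> card A = 2 \<and> (\<forall>e1\<in>A. \<forall>e2\<in>A. e1 \<inter> e2 \<noteq> {})}"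
  define T where "T = {A. A \<subseteq> F \<and> card A = 2}"
  define X where "X = (\<Sum>f\<in>F. card (f \<inter> Nu))"
  have L: "line_graph_edges E = (card S choose 2) + card P2 + X"
    using count[OF sg, of u] unfolding S_def F_def P2_def X_def Nu_def by simp
  have finE: "finite E" using sg sg_finite_E by blast
  have finF: "finite F" using finE unfolding F_def by simp
  have c2: "\<And>e. e \<in> F \<Longrightarrow> card e = 2" using sg sg_card2 unfolding F_def by blast
  have fine: "\<And>e. e \<in> F \<Longrightarrow> finite e" using c2 by (metis card.infinite zero_neq_numeral)
  have finT: "finite T" unfolding T_def using finF by simp
  have cT: "card T = card F choose 2" unfolding T_def using n_subsets[OF finF] by simp
  have PT: "P2 \<subseteq> T" unfolding P2_def T_def by blast
  have b1: "card P2 \<le> card F choose 2" using card_mono[OF finT PT] cT by simp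
  have e1: "card P2 = card F choose 2 \<longleftrightarrow> (\<forall>f\<in>F. \<forall>g\<in>F. f \<inter> g \<noteq> {})"
  proof
    assume "card P2 = card F choose 2"
    then have "P2 = T" using card_subset_eq[OF finT PT] cT by simp
    show "\<forall>f\<in>F. \<forall>g\<in>F. f \<inter> g \<noteq> {}"
    proof (intro ballI)
      fix f g assume fg: "f \<in> F" "g \<in> F"
      show "f \<inter> g \<noteq> {}"
      proof (cases "f = g")
        case True then show ?thesis using c2[OF fg(1)] by auto
      next
        case False
        then have "{f,g} \<in> T" unfolding T_def using fg by simp
        then have "{f,g} \<in> P2" using \<open>P2 = T\<close> by simp
        then show ?thesis unfolding P2_def by blast
      qed
    qed
  next
    assume "\<forall>f\<in>F. \<forall>g\<in>F. f \<inter> g \<noteq> {}"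
    then have "T \<subseteq> P2" unfolding T_def P2_def by blast
    then have "P2 = T" using PT by blast
    then show "card P2 = card F choose 2" using cT by simp
  qed
  have le2: "\<And>f. f \<in> F \<Longrightarrow> card (f \<inter> Nu) \<le> 2"
    using c2 fine by (metis card_mono inf_le1)
  have eq2: "\<And>f. f \<in> F \<Longrightarrow> card (f \<inter> Nu) = 2 \<longleftrightarrow> f \<subseteq> Nu"
  proof -
    fix f assume f: "f \<in> F"
    show "card (f \<inter> Nu) = 2 \<longleftrightarrow> f \<subseteq> Nu"
    proof
      assume "card (f \<inter> Nu) = 2"
      then have "f \<inter> Nu = f" using card_subset_eq[OF fine[OF f], of "f \<inter> Nu"] c2[OF f] by simp
      then show "f \<subseteq> Nu" by blast
    next
      assume "f \<subseteq> Nu" then have "f \<inter> Nu = f" by blast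
      then show "card (f \<inter> Nu) = 2" using c2[OF f] by simp
    qed
  qed
  have b2: "X \<le> 2 * card F"
  proof -
    have "X \<le> (\<Sum>f\<in>F. 2)" unfolding X_def by (rule sum_mono) (use le2 in blast)
    then show ?thesis by simp
  qed
  have e2: "X = 2 * card F \<longleftrightarrow> (\<forall>f\<in>F. f \<subseteq> Nu)"
  proof
    assume X: "X = 2 * card F"
    show "\<forall>f\<in>F. f \<subseteq> Nu"
    proof (rule ccontr)
      assume "\<not> (\<forall>f\<in>F. f \<subseteq> Nu)"
      then obtain f0 where f0: "f0 \<in> F" "\<not> f0 \<subseteq> Nu" by blast
      then have "card (f0 \<inter> Nu) < 2" using le2[OF f0(1)] eq2[OF f0(1)] by simp
      then have "X < (\<Sum>f\<in>F. 2)" unfolding X_def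
        using sum_strict_mono_ex1[OF finF, of "\<lambda>f. card (f \<inter> Nu)" "\<lambda>f. 2"] le2 f0(1) by blast
      then show False using X by simp
    qed
  next
    assume "\<forall>f\<in>F. f \<subseteq> Nu"
    then have "X = (\<Sum>f\<in>F. 2)" unfolding X_def using eq2 by (intro sum.cong) auto
    then show "X = 2 * card F" by simp
  qed
  show "line_graph_edges E \<le> (card S choose 2) + (card F choose 2) + 2 * card F"
    using L b1 b2 by linarith
  show "line_graph_edges E = (card S choose 2) + (card F choose 2) + 2 * card F \<longleftrightarrow>
         ((\<forall>f\<in>F. \<forall>g\<in>F. f \<inter> g \<noteq> {}) \<and> (\<forall>f\<in>F. f \<subseteq> Nu))"
    using L b1 b2 e1 e2 by linarith
qed



lemma deg_split:
  assumes "simple_graph V E"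
  shows "card {e\<in>E. u\<in>e} + card {e\<in>E. u\<notin>e} = card E"
proof -
  have finE: "finite E" using assms sg_finite_E by blast
  have "E = {e\<in>E. u\<in>e} \<union> {e\<in>E. u\<notin>e}" by blast
  moreover have "card ({e\<in>E. u\<in>e} \<union> {e\<in>E. u\<notin>e}) = card {e\<in>E. u\<in>e} + card {e\<in>E. u\<notin>e}"
    using finE by (intro card_Un_disjoint) auto
  ultimately show ?thesis by simp
qed

lemma max_attained:
  assumes sg: "simple_graph V E" and ne: "E \<noteq> {}"
  shows "\<exists>u\<in>V. degree E u = max_degree V E"
proof -
  obtain e where "e \<in> E" using ne by blast
  then obtain x y where "x \<in> V" using sg_edge[OF sg] by blast
  then have "V \<noteq> {}" by blast
  moreover have "finite V" using sg unfolding simple_graph_def by blast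
  ultimately have "Max (degree E ` V) \<in> degree E ` V" by simp
  then show ?thesis unfolding max_degree_def by force
qed

lemma deg_other:
  assumes sg: "simple_graph V E" and xu: "x \<noteq> u"
  shows "degree E x \<le> Suc (card {e\<in>E. u\<notin>e})"
proof -
  have finE: "finite E" using sg sg_finite_E by blast
  have "{e\<in>E. x\<in>e} \<subseteq> insert {u,x} {e\<in>E. u\<notin>e}"
  proof
    fix e assume e: "e \<in> {e\<in>E. x\<in>e}"
    show "e \<in> insert {u,x} {e\<in>E. u\<notin>e}"
    proof (cases "u \<in> e")
      case True
      then obtain y where "e = {u,y}" using edge_with[OF sg] e by blast
      then have "e = {u,x}" using e xu by auto
      then show ?thesis by blast
    next
      case False then show ?thesis using e by blast
    qed
  qed
  then have "card {e\<in>E. x\<in>e} \<le> card (insert {u,x} {e\<in>E. u\<notin>e})"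
    using finE by (intro card_mono) auto
  also have "\<dots> \<le> Suc (card {e\<in>E. u\<notin>e})" using finE by (simp add: card_insert_if)
  finally show ?thesis unfolding degree_def .
qed

lemma upper:
  assumes sg: "simple_graph V E" and cE: "card E = N" and md: "max_degree V E = D" and ne: "E \<noteq> {}"
  shows "line_graph_edges E \<le> (D choose 2) + ((N - D) choose 2) + 2 * (N - D)"
proof -
  obtain u where u: "u \<in> V" "degree E u = D" using max_attained[OF sg ne] md by auto
  have cS: "card {e\<in>E. u\<in>e} = D" using u unfolding degree_def by simp
  have cF: "card {e\<in>E. u\<notin>e} = N - D" using deg_split[OF sg, of u] cS cE by simp
  show ?thesis using bound_eq(1)[OF sg, of u] cS cF by simp
qed

lemma choose_fact: "((t::nat) + 2) choose 2 = (t choose 2) + 2 * t + 1"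
  by (simp add: numeral_2_eq_2)

lemma witness:
  fixes N t :: nat
  assumes t1: "t \<ge> 1" and N: "N \<ge> 2 * t + 1"
  shows "\<exists>(V :: nat set) E. simple_graph V E \<and> card E = N \<and> max_degree V E = N - t \<and>
      min_degree V E \<ge> 1 \<and> line_graph_edges E = ((N - t) choose 2) + (t choose 2) + 2 * t"
proof -
  define D where "D = N - t"
  have tD: "t + 1 \<le> D" using N unfolding D_def by simp
  define S0 where "S0 = (\<lambda>x. {0::nat, x}) ` {1..D}"
  define F0 where "F0 = (\<lambda>j. {1::nat, j}) ` {2..t+1}"
  define E where "E = S0 \<union> F0"
  define V where "V = {0..D}"
  have sg: "simple_graph V E"
    unfolding simple_graph_def
  proof (intro conjI ballI)
    show "finite V" unfolding V_def by simp
  next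
    fix e assume "e \<in> E"
    then consider (a) x where "x \<in> {1..D}" "e = {0,x}" | (b) j where "j \<in> {2..t+1}" "e = {1,j}"
      unfolding E_def S0_def F0_def by blast
    then show "\<exists>x y. x \<noteq> y \<and> x \<in> V \<and> y \<in> V \<and> e = {x, y}"
    proof cases
      case a then show ?thesis unfolding V_def by (intro exI[of _ 0] exI[of _ x]) auto
    next
      case b then show ?thesis unfolding V_def using tD by (intro exI[of _ 1] exI[of _ j]) auto
    qed
  qed
  have SE: "{e\<in>E. 0\<in>e} = S0" unfolding E_def S0_def F0_def by auto
  have FE: "{e\<in>E. 0\<notin>e} = F0" unfolding E_def S0_def F0_def by auto
  have inj1: "inj_on (\<lambda>x. {0::nat, x}) {1..D}"
    by (rule inj_onI) (auto simp: doubleton_eq_iff)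
  have inj2: "inj_on (\<lambda>j. {1::nat, j}) {2..t+1}"
    by (rule inj_onI) (auto simp: doubleton_eq_iff)
  have cS: "card S0 = D" unfolding S0_def using card_image[OF inj1] by simp
  have cF: "card F0 = t" unfolding F0_def using card_image[OF inj2] by simp
  have cE: "card E = N" using deg_split[OF sg, of 0] SE FE cS cF N unfolding D_def by simp
  have d0: "degree E 0 = D" unfolding degree_def using SE cS by simp
  have finV: "finite V" unfolding V_def by simp
  have md: "max_degree V E = D"
    unfolding max_degree_def
  proof (rule Max_eqI)
    show "finite (degree E ` V)" using finV by simp
  next
    fix y assume "y \<in> degree E ` V"
    then obtain x where x: "x \<in> V" "y = degree E x" by blast
    show "y \<le> D"
    proof (cases "x = 0")
      case True then show ?thesis using x d0 by simp
    next
      case False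
      then have "degree E x \<le> Suc t" using deg_other[OF sg False] FE cF by simp
      then show ?thesis using x tD by simp
    qed
  next
    show "D \<in> degree E ` V" using d0 unfolding V_def by force
  qed
  have finE: "finite E" using sg sg_finite_E by blast
  have mind: "min_degree V E \<ge> 1"
  proof -
    have "V \<noteq> {}" unfolding V_def by simp
    then have "Min (degree E ` V) \<in> degree E ` V" using finV by simp
    then obtain x where x: "x \<in> V" "min_degree V E = degree E x" unfolding min_degree_def by force
    obtain e where e: "e \<in> E" "x \<in> e"
    proof (cases "x = 0")
      case True
      have "{0,1} \<in> E" unfolding E_def S0_def using tD by force
      then show ?thesis using that True by blast
    next
      case False
      then have "{0,x} \<in> E" unfolding E_def S0_def using x V_def by force
      then show ?thesis using that by blast
    qed
    then have "{e\<in>E. x\<in>e} \<noteq> {}" by blast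
    then have "card {e\<in>E. x\<in>e} \<noteq> 0" using finE by simp
    then show ?thesis using x unfolding degree_def by simp
  qed
  have pw: "\<forall>f\<in>{e\<in>E. 0\<notin>e}. \<forall>g\<in>{e\<in>E. 0\<notin>e}. f \<inter> g \<noteq> {}"
    unfolding FE F0_def by blast
  have sub: "\<forall>f\<in>{e\<in>E. 0\<notin>e}. f \<subseteq> {x. {0,x} \<in> E}"
  proof
    fix f assume "f \<in> {e\<in>E. 0\<notin>e}"
    then obtain j where j: "j \<in> {2..t+1}" "f = {1,j}" unfolding FE F0_def by blast
    have "{0,1} \<in> E" "{0,j} \<in> E" unfolding E_def S0_def using tD j by force+
    then show "f \<subseteq> {x. {0,x} \<in> E}" using j by blast
  qed
  have "line_graph_edges E = (card {e\<in>E. 0\<in>e} choose 2) + (card {e\<in>E. 0\<notin>e} choose 2) + 2 * card {e\<in>E. 0\<notin>e}"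
    using bound_eq(2)[OF sg, of 0] pw sub by blast
  then have "line_graph_edges E = (D choose 2) + (t choose 2) + 2 * t" using SE FE cS cF by simp
  then show ?thesis using sg cE md mind unfolding D_def by blast
qed



theorem mainTheorem13:
  fixes V :: "'a set" and E :: "'a set set" and N t :: nat
  assumes "t \<ge> 1" and "N \<ge> 2 * t + 1"
    and "simple_graph V E"
    and "\<forall>v\<in>V. \<exists>e\<in>E. v \<in> e"
    and "card E = N"
    and "max_degree V E = N - t"
    and "real (N - t) > real N / 2"
    and "line_graph_edges E = f_max N (N - t)"
  shows "f_max N (N - t) = ((N - t) choose 2) + ((t + 2) choose 2) - 1 \<and>
    ((\<exists>u v. {u, v} \<in> E \<and> u \<noteq> v \<and> degree E u = N - t \<and> degree E v = t + 1 \<and>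
        (\<forall>w. {v, w} \<in> E \<and> w \<noteq> u \<longrightarrow> {u, w} \<in> E))
     \<or> (t = 3 \<and> (\<exists>u L a b c. u \<notin> L \<and> finite L \<and> card L = N - 3 \<and> a \<in> L \<and> b \<in> L \<and> c \<in> L \<and>
          a \<noteq> b \<and> b \<noteq> c \<and> a \<noteq> c \<and>
          E = (\<lambda>x. {u, x}) ` L \<union> {{a, b}, {b, c}, {a, c}})))"
proof -
  note t1 = assms(1) and NN = assms(2) and sg = assms(3) and cE = assms(5) and md = assms(6)
    and lf = assms(8)
  define B where "B = ((N - t) choose 2) + (t choose 2) + 2 * t"
  have Bform: "((N - t) choose 2) + ((t + 2) choose 2) - 1 = B"
    unfolding B_def using choose_fact[of t] by simp
  define M where "M = {line_graph_edges E | (V :: nat set) E.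
      simple_graph V E \<and> card E = N \<and> max_degree V E = N - t \<and> min_degree V E \<ge> 1}"
  have Mle: "\<And>m. m \<in> M \<Longrightarrow> m \<le> B"
  proof -
    fix m assume "m \<in> M"
    then obtain V' :: "nat set" and E' where h: "m = line_graph_edges E'" "simple_graph V' E'"
      "card E' = N" "max_degree V' E' = N - t" unfolding M_def by blast
    have "E' \<noteq> {}" using h(3) NN by auto
    then have "m \<le> ((N - t) choose 2) + ((N - (N - t)) choose 2) + 2 * (N - (N - t))"
      using upper[OF h(2) h(3) h(4)] h(1) by simp
    moreover have "N - (N - t) = t" using NN by simp
    ultimately show "m \<le> B" unfolding B_def by simp
  qed
  obtain V0 :: "nat set" and E0 where w: "simple_graph V0 E0" "card E0 = N" "max_degree V0 E0 = N - t"
      "min_degree V0 E0 \<ge> 1" "line_graph_edges E0 = ((N - t) choose 2) + (t choose 2) + 2 * t"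
    using witness[OF t1 NN] by blast
  have BM: "B \<in> M"
  proof -
    have "B = line_graph_edges E0 \<and> simple_graph V0 E0 \<and> card E0 = N \<and> max_degree V0 E0 = N - t \<and> min_degree V0 E0 \<ge> 1"
      using w unfolding B_def by simp
    then show ?thesis unfolding M_def by blast
  qed
  have finM: "finite M" using Mle by (meson finite_atMost finite_subset subsetI atMost_iff)
  have fm: "f_max N (N - t) = B"
    unfolding f_max_def M_def[symmetric] using Max_eqI[OF finM Mle BM] .
  have ne: "E \<noteq> {}" using cE NN by auto
  obtain u where u: "u \<in> V" "degree E u = N - t" using max_attained[OF sg ne] md by auto
  define S where "S = {e\<in>E. u\<in>e}"
  define F where "F = {e\<in>E. u\<notin>e}"
  define Nu where "Nu = {x. {u,x}\<in>E}"
  have cS: "card S = N - t" using u unfolding degree_def S_def by simp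
  have cF: "card F = t" using deg_split[OF sg, of u] cS cE NN unfolding S_def F_def by simp
  have eqn: "line_graph_edges E = (card S choose 2) + (card F choose 2) + 2 * card F"
    using lf fm cS cF unfolding B_def by simp
  have pw: "\<forall>f\<in>F. \<forall>g\<in>F. f \<inter> g \<noteq> {}" and sub: "\<forall>f\<in>F. f \<subseteq> Nu"
    using bound_eq(2)[OF sg, of u] eqn unfolding S_def F_def Nu_def by blast+
  have finE: "finite E" using sg sg_finite_E by blast
  have finF: "finite F" using finE unfolding F_def by simp
  have c2F: "\<forall>f\<in>F. card f = 2" using sg_card2[OF sg] unfolding F_def by blast
  have Fne: "F \<noteq> {}" using cF t1 by auto
  have uF: "\<And>f. f \<in> F \<Longrightarrow> u \<notin> f" unfolding F_def by blast
  have EFS: "E = S \<union> F" unfolding S_def F_def by blast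
  have struct: "(\<exists>u v. {u, v} \<in> E \<and> u \<noteq> v \<and> degree E u = N - t \<and> degree E v = t + 1 \<and>
        (\<forall>w. {v, w} \<in> E \<and> w \<noteq> u \<longrightarrow> {u, w} \<in> E))
     \<or> (t = 3 \<and> (\<exists>u L a b c. u \<notin> L \<and> finite L \<and> card L = N - 3 \<and> a \<in> L \<and> b \<in> L \<and> c \<in> L \<and>
          a \<noteq> b \<and> b \<noteq> c \<and> a \<noteq> c \<and>
          E = (\<lambda>x. {u, x}) ` L \<union> {{a, b}, {b, c}, {a, c}}))"
  proof (cases "\<exists>v. \<forall>f\<in>F. v \<in> f")
    case True
    then obtain v where v: "\<forall>f\<in>F. v \<in> f" by blast
    obtain f0 where f0: "f0 \<in> F" using Fne by blast
    have vu: "v \<noteq> u" using v f0 uF by blast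
    have uvE: "{u,v} \<in> E" using v f0 sub unfolding Nu_def by blast
    have "{e\<in>E. v\<in>e} = insert {u,v} F"
    proof
      show "{e\<in>E. v\<in>e} \<subseteq> insert {u,v} F"
      proof
        fix e assume e: "e \<in> {e\<in>E. v\<in>e}"
        show "e \<in> insert {u,v} F"
        proof (cases "u \<in> e")
          case True
          then obtain y where "e = {u,y}" using edge_with[OF sg] e by blast
          then have "e = {u,v}" using e vu by auto
          then show ?thesis by blast
        next
          case False then show ?thesis using e unfolding F_def by blast
        qed
      qed
    next
      show "insert {u,v} F \<subseteq> {e\<in>E. v\<in>e}" using uvE v unfolding F_def by blast
    qed
    moreover have "{u,v} \<notin> F" using uF by blast
    ultimately have dv: "degree E v = t + 1" unfolding degree_def using finF cF by simp
    have nb: "\<forall>w. {v, w} \<in> E \<and> w \<noteq> u \<longrightarrow> {u, w} \<in> E"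
    proof (intro allI impI)
      fix w assume w: "{v, w} \<in> E \<and> w \<noteq> u"
      then have "{v,w} \<in> F" using vu unfolding F_def by blast
      then have "w \<in> Nu" using sub by blast
      then show "{u, w} \<in> E" unfolding Nu_def by blast
    qed
    show ?thesis using uvE vu u(2) dv nb by blast
  next
    case False
    then obtain a b c where abc: "a \<noteq> b" "b \<noteq> c" "a \<noteq> c" "F = {{a,b},{b,c},{a,c}}"
      using intersecting[OF c2F pw Fne] by blast
    have "card F = 3" using abc by (simp add: doubleton_eq_iff)
    then have t3: "t = 3" using cF by simp
    have uNu: "u \<notin> Nu" using sg_card2[OF sg, of "{u,u}"] unfolding Nu_def by auto
    have NuV: "Nu \<subseteq> V"
    proof
      fix x assume "x \<in> Nu"
      then have "{u,x} \<in> E" unfolding Nu_def by blast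
      then obtain p q where "p \<in> V" "q \<in> V" "{u,x} = {p,q}" using sg_edge[OF sg] by blast
      then show "x \<in> V" by (auto simp: doubleton_eq_iff)
    qed
    have finNu: "finite Nu" using NuV sg unfolding simple_graph_def by (meson finite_subset)
    have Simg: "S = (\<lambda>x. {u, x}) ` Nu"
    proof
      show "S \<subseteq> (\<lambda>x. {u, x}) ` Nu"
      proof
        fix e assume e: "e \<in> S"
        then obtain y where "e = {u,y}" using edge_with[OF sg] unfolding S_def by blast
        then show "e \<in> (\<lambda>x. {u, x}) ` Nu" using e unfolding S_def Nu_def by blast
      qed
    next
      show "(\<lambda>x. {u, x}) ` Nu \<subseteq> S" unfolding S_def Nu_def by blast
    qed
    have inj: "inj_on (\<lambda>x. {u, x}) Nu"
    proof (rule inj_onI)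
      fix x y assume xy: "x \<in> Nu" "y \<in> Nu" "{u,x} = {u,y}"
      have "x \<noteq> u" using xy uNu by blast
      moreover have "x \<in> {u,y}" using xy by blast
      ultimately show "x = y" by blast
    qed
    have cNu: "card Nu = N - 3" using card_image[OF inj] Simg cS t3 by simp
    have inF: "{a,b} \<in> F" "{b,c} \<in> F" using abc(4) by simp_all
    have abcNu: "a \<in> Nu" "b \<in> Nu" "c \<in> Nu" using sub inF by blast+
    have Eeq: "E = (\<lambda>x. {u, x}) ` Nu \<union> {{a, b}, {b, c}, {a, c}}"
    proof -
      have "E = S \<union> F" by (rule EFS)
      also have "\<dots> = (\<lambda>x. {u, x}) ` Nu \<union> {{a, b}, {b, c}, {a, c}}" by (simp only: Simg abc(4))
      finally show ?thesis .
    qed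
    have X: "u \<notin> Nu \<and> finite Nu \<and> card Nu = N - 3 \<and> a \<in> Nu \<and> b \<in> Nu \<and> c \<in> Nu \<and>
          a \<noteq> b \<and> b \<noteq> c \<and> a \<noteq> c \<and>
          E = (\<lambda>x. {u, x}) ` Nu \<union> {{a, b}, {b, c}, {a, c}}"
      by (intro conjI uNu finNu cNu abcNu abc(1) abc(2) abc(3) Eeq)
    have "\<exists>u L a b c. u \<notin> L \<and> finite L \<and> card L = N - 3 \<and> a \<in> L \<and> b \<in> L \<and> c \<in> L \<and>
          a \<noteq> b \<and> b \<noteq> c \<and> a \<noteq> c \<and>
          E = (\<lambda>x. {u, x}) ` L \<union> {{a, b}, {b, c}, {a, c}}"
      by (rule exI[of _ u], rule exI[of _ Nu], rule exI[of _ a], rule exI[of _ b], rule exI[of _ c], rule X)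
    then show ?thesis using t3 by (intro disjI2 conjI)
  qed
  show ?thesis using fm Bform struct by simp
qed


end
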